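(* Let $0\le c<1$ and $0\le\delta\le q$ with $q>0$, and let $\mathbf A(\mu)=\begin{bmatrix}0&1-\delta\mu\\-c&1+c-q\mu\end{bmatrix}$. For any $k\ge1$ and any $\mu_1,\dots,\mu_k\in\big[0,\frac{(1-c)^2}{q-c\delta}\big]$, $$\Big\|\prod_{i=1}^k\mathbf A(\mu_i)\Big\|\le\frac{4}{1-c}.$$
   Context: $\|\cdot\|$ denotes the spectral norm; the product is an ordered matrix product. *)

theory Defs
  imports "HOL-Analysis.Analysis"
begin

definition Amat :: "real \<Rightarrow> real \<Rightarrow> real \<Rightarrow> real \<Rightarrow> real^2^2" where
  "Amat c \<delta> q \<mu> = vector [vector [0, 1 - \<delta> * \<mu>], vector [- c, 1 + c - q * \<mu>]]"

definition Aprod :: "real \<Rightarrow> real \<Rightarrow> real \<Rightarrow> real list \<Rightarrow> real^2^2" where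
  "Aprod c \<delta> q mus = foldr (\<lambda>\<mu> M. Amat c \<delta> q \<mu> ** M) mus (mat 1)"

definition spec_norm :: "real^2^2 \<Rightarrow> real" where
  "spec_norm M = onorm (\<lambda>x. M *v x)"

end

theory Submission
  imports Defs
begin

definition Qf :: "real \<Rightarrow> real^2 \<Rightarrow> real" where
  "Qf c x = (x$2 - c * x$1)^2 + (x$1 - x$2)^2"

lemma norm2_sq: "(norm (x::real^2))^2 = (x$1)^2 + (x$2)^2"
  by (simp add: norm_vec_def L2_set_def sum_2)

lemma Amat_mult:
  "(Amat c d q m *v x)$1 = (1 - d*m) * x$2"
  "(Amat c d q m *v x)$2 = - c * x$1 + (1 + c - q*m) * x$2"
  by (simp_all add: Amat_def matrix_vector_mult_def sum_2)

lemma key_ineq: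
  fixes c p r a b :: real
  assumes "0 \<le> c" "c < 1" "0 \<le> r" "r \<le> p" "p \<le> (1-c)^2"
  shows "((b - c*a) - p*b)^2 + (c*(a-b) + r*b)^2 \<le> (b - c*a)^2 + (a - b)^2"
proof -
  define al where "al = b - c*a"
  define be where "be = a - b"
  have hb: "al + c*be = (1-c)*b" unfolding al_def be_def by (simp add: algebra_simps)
  define D where "D = (b - c*a)^2 + (a - b)^2 - (((b - c*a) - p*b)^2 + (c*(a-b) + r*b)^2)"
  have D_eq: "D = (1-c^2)*be^2 - 2*c*(p+r)*be*b + (2*p*(1-c) - p^2 - r^2)*b^2"
    unfolding D_def al_def be_def by (simp add: algebra_simps power2_eq_square)
  define K where "K = (1-c^2)*(2*p*(1-c) - p^2 - r^2) - c^2*(p+r)^2"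
  have DD: "(1-c^2)*D = ((1-c^2)*be - c*(p+r)*b)^2 + K*b^2"
    unfolding D_eq K_def by (simp add: algebra_simps power2_eq_square)
  have p0: "0 \<le> p" using assms by linarith
  have c2: "c^2 \<le> c" using assms by (simp add: power2_eq_square mult_left_le_one_le)
  have s1: "p^2 + r^2 \<le> 2*p^2" using assms p0 by (simp add: power2_eq_square mult_mono)
  have s2: "(p+r)^2 \<le> 4*p^2"
  proof -
    have "p + r \<le> 2*p" "0 \<le> p + r" using assms by auto
    then have "(p+r)^2 \<le> (2*p)^2" by (rule power_mono)
    then show ?thesis by (simp add: power2_eq_square)
  qed
  have "K \<ge> (1-c^2)*(2*p*(1-c) - 2*p^2) - c^2*(4*p^2)"
  proof -
    have "(1-c^2)*(p^2 + r^2) \<le> (1-c^2)*(2*p^2)"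
      using s1 c2 assms by (intro mult_left_mono) auto
    moreover have "c^2*(p+r)^2 \<le> c^2*(4*p^2)" using s2 by (intro mult_left_mono) auto
    ultimately show ?thesis unfolding K_def by (simp add: algebra_simps)
  qed
  moreover have "(1-c^2)*(2*p*(1-c) - 2*p^2) - c^2*(4*p^2) = 2*p*((1-c^2)*(1-c) - p*(1+c^2))"
    by (simp add: algebra_simps power2_eq_square)
  moreover have "p*(1+c^2) \<le> (1-c)^2*(1+c^2)" using assms by (intro mult_right_mono) auto
  moreover have "(1-c^2)*(1-c) - (1-c)^2*(1+c^2) = (1-c)^2*(c - c^2)"
    by (simp add: algebra_simps power2_eq_square)
  moreover have "0 \<le> (1-c)^2*(c - c^2)" using c2 by simp
  ultimately have "K \<ge> 0" using p0
    by (smt (verit, best) mult_nonneg_nonneg)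
  then have "(1-c^2)*D \<ge> 0" unfolding DD by simp
  moreover have "1 - c^2 > 0" using assms c2 by linarith
  ultimately have "D \<ge> 0" by (simp add: zero_le_mult_iff)
  then show ?thesis unfolding D_def by simp
qed

lemma step:
  assumes "0 \<le> c" "c < 1" "0 \<le> d" "d \<le> q" "q > 0" "0 \<le> m" "m \<le> (1 - c)^2 / (q - c * d)"
  shows "Qf c (Amat c d q m *v x) \<le> Qf c x"
proof -
  have cd: "c*d \<le> d" using assms by (simp add: mult_left_le_one_le)
  have "c*d \<le> c*q" using assms by (intro mult_left_mono) auto
  moreover have "c*q < q" using assms by simp
  ultimately have pos: "q - c*d > 0" by linarith
  define p where "p = m*(q - c*d)"
  define r where "r = m*(q - d)"
  have "p \<le> (1-c)^2" using assms pos unfolding p_def by (simp add: pos_le_divide_eq)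
  moreover have "0 \<le> r" unfolding r_def using assms by simp
  moreover have "r \<le> p" unfolding r_def p_def using assms cd by (intro mult_left_mono) auto
  ultimately have H: "((x$2 - c*x$1) - p*x$2)^2 + (c*(x$1-x$2) + r*x$2)^2 \<le> (x$2 - c*x$1)^2 + (x$1 - x$2)^2"
    using assms by (intro key_ineq) auto
  have e1: "(Amat c d q m *v x)$2 - c * (Amat c d q m *v x)$1 = (x$2 - c*x$1) - p*x$2"
    unfolding Amat_mult p_def by (simp add: algebra_simps)
  have e2: "(Amat c d q m *v x)$1 - (Amat c d q m *v x)$2 = c*(x$1-x$2) + r*x$2"
    unfolding Amat_mult r_def by (simp add: algebra_simps)
  show ?thesis unfolding Qf_def e1 e2 using H .
qed

lemma prod_step:
  assumes "0 \<le> c" "c < 1" "0 \<le> d" "d \<le> q" "q > 0"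
    and "\<forall>\<mu> \<in> set mus. 0 \<le> \<mu> \<and> \<mu> \<le> (1 - c)^2 / (q - c * d)"
  shows "Qf c (Aprod c d q mus *v x) \<le> Qf c x"
  using assms(6)
proof (induction mus)
  case Nil
  then show ?case by (simp add: Aprod_def)
next
  case (Cons m ms)
  have "Qf c (Aprod c d q (m # ms) *v x) = Qf c (Amat c d q m *v (Aprod c d q ms *v x))"
    by (simp add: Aprod_def matrix_vector_mul_assoc)
  also have "\<dots> \<le> Qf c (Aprod c d q ms *v x)" using Cons.prems assms by (intro step) auto
  also have "\<dots> \<le> Qf c x" using Cons by auto
  finally show ?case .
qed

lemma Q_upper: "0 \<le> c \<Longrightarrow> c < 1 \<Longrightarrow> Qf c x \<le> 4 * (norm x)^2"
proof -
  assume a: "0 \<le> c" "c < 1"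
  have "(x$2 - c*x$1)^2 \<le> 2*((x$1)^2 + (x$2)^2)"
  proof -
    have "(x$2 - c*x$1)^2 \<le> 2*(x$2)^2 + 2*(c*x$1)^2"
      using sum_squares_ge_zero[of "x$2 + c*x$1" 0] by (simp add: power2_eq_square algebra_simps)
    moreover have "(c*x$1)^2 \<le> (x$1)^2" using a
      by (simp add: power_mult_distrib mult_left_le_one_le power_le_one)
    ultimately show ?thesis by simp
  qed
  moreover have "(x$1 - x$2)^2 \<le> 2*((x$1)^2 + (x$2)^2)"
    using sum_squares_ge_zero[of "x$2 + x$1" 0] by (simp add: power2_eq_square algebra_simps)
  ultimately show ?thesis unfolding Qf_def norm2_sq by simp
qed

lemma Q_lower: "0 \<le> c \<Longrightarrow> c < 1 \<Longrightarrow> (1-c)^2 * (norm y)^2 \<le> 4 * Qf c y"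
proof -
  assume a: "0 \<le> c" "c < 1"
  define al where "al = y$2 - c*y$1"
  define be where "be = y$1 - y$2"
  have "(1-c)^2 * (norm y)^2 = (al + be)^2 + (al + c*be)^2"
    unfolding norm2_sq al_def be_def by (simp add: algebra_simps power2_eq_square)
  also have "\<dots> \<le> 2*(al^2+be^2) + 2*(al^2 + (c*be)^2)"
    using sum_squares_ge_zero[of "al - be" 0] sum_squares_ge_zero[of "al - c*be" 0]
    by (simp add: power2_eq_square algebra_simps)
  also have "\<dots> \<le> 4*(al^2+be^2)"
  proof -
    have "(c*be)^2 \<le> be^2" using a
      by (simp add: power_mult_distrib mult_left_le_one_le power_le_one)
    then show ?thesis by simp
  qed
  finally show ?thesis unfolding Qf_def al_def be_def by simp
qed

theorem mainTheorem9:
  fixes c \<delta> q :: real and mus :: "real list"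
  assumes "0 \<le> c" "c < 1" "0 \<le> \<delta>" "\<delta> \<le> q" "q > 0"
    and "length mus \<ge> 1"
    and "\<forall>\<mu> \<in> set mus. 0 \<le> \<mu> \<and> \<mu> \<le> (1 - c)^2 / (q - c * \<delta>)"
  shows "spec_norm (Aprod c \<delta> q mus) \<le> 4 / (1 - c)"
  unfolding spec_norm_def
proof (rule onorm_le)
  fix x :: "real^2"
  let ?y = "Aprod c \<delta> q mus *v x"
  have "(1-c)^2 * (norm ?y)^2 \<le> 4 * Qf c ?y" using assms by (intro Q_lower) auto
  also have "\<dots> \<le> 4 * Qf c x" using prod_step[OF assms(1-5) assms(7)] by simp
  also have "\<dots> \<le> 16 * (norm x)^2" using Q_upper[OF assms(1,2)] by simp
  finally have "((1-c) * norm ?y)^2 \<le> (4 * norm x)^2" by (simp add: power_mult_distrib)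
  then have "(1-c) * norm ?y \<le> 4 * norm x"
    by (rule power2_le_imp_le) simp
  then show "norm ?y \<le> 4 / (1 - c) * norm x" using assms(2)
    by (simp add: field_simps)
qed

end
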